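(* Let $F$ be a bipartite graph on vertices $v_1,\dots,v_m$, let $\mathcal{H}$ be a nonempty class of graphs, and let $H$ be an $\mathcal{H}$-blow-up of $F$. Then $H\times K_2\cong H^{V(F)}$.
   Context: The tensor product $H'\times K_2$ has vertex set $V(H')\times\{1,2\}$, with $(x,i)\sim(y,j)$ iff $xy\in E(H')$ and $i\ne j$. The $\mathcal{H}$-blow-up $H$ of $F$ is the disjoint union of $H_1,\dots,H_m\in\mathcal{H}$ (on vertex sets $V_1,\dots,V_m$, $H_i$ replacing $v_i$) with all edges between $V_i$ and $V_j$ added whenever $v_iv_j\in E(F)$. For $U\subseteq V(F)$, the graph $H^{U}$ is defined as follows: take two vertex-disjoint copies of $H$, on $\bigsqcup_i W_i$ and $\bigsqcup_i W_i'$, where $W_i,W_i'$ are copies of $V_i$; then for each $j$ with $v_j\in U$, delete all edges inside $W_j$ and inside $W_j'$ and instead join the copy $w\in W_j$ of $x\in V_j$ to the copy $w'\in W_j'$ of $y\in V_j$ whenever $xy\in E(H_j)$ (so the graph on $W_j\sqcup W_j'$ becomes $H_j\times K_2$). All other edges are as in the two copies of $H$. *)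

theory Defs
  imports Main
begin

type_synonym 'a graph = "'a set \<times> ('a \<Rightarrow> 'a \<Rightarrow> bool)"

definition verts :: "'a graph \<Rightarrow> 'a set" where "verts G = fst G"
definition adj :: "'a graph \<Rightarrow> 'a \<Rightarrow> 'a \<Rightarrow> bool" where "adj G = snd G"

definition simple_graph :: "'a graph \<Rightarrow> bool" where
  "simple_graph G \<longleftrightarrow> finite (verts G) \<and>
     (\<forall>x y. adj G x y \<longrightarrow> x \<in> verts G \<and> y \<in> verts G \<and> x \<noteq> y \<and> adj G y x)"

definition bipartite :: "'a graph \<Rightarrow> bool" where
  "bipartite G \<longleftrightarrow> (\<exists>A \<subseteq> verts G. \<forall>x y. adj G x y \<longrightarrow> (x \<in> A \<longleftrightarrow> y \<notin> A))"

definition graph_iso :: "'a graph \<Rightarrow> 'b graph \<Rightarrow> bool" where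
  "graph_iso G G' \<longleftrightarrow> (\<exists>f. bij_betw f (verts G) (verts G') \<and>
     (\<forall>x\<in>verts G. \<forall>y\<in>verts G. adj G x y \<longleftrightarrow> adj G' (f x) (f y)))"

text \<open>Tensor product with K_2; the two vertices of K_2 are represented by bool.\<close>
definition tensor_K2 :: "'a graph \<Rightarrow> ('a \<times> bool) graph" where
  "tensor_K2 G = (verts G \<times> UNIV, (\<lambda>(x,i) (y,j). adj G x y \<and> i \<noteq> j))"

text \<open>Blow-up of F: vertex v of F is replaced by the graph Hs v; the parts V_v are made
  disjoint by tagging with v; complete bipartite joins between parts of adjacent vertices.\<close>
definition blowup :: "'v graph \<Rightarrow> ('v \<Rightarrow> 'a graph) \<Rightarrow> ('v \<times> 'a) graph" where
  "blowup F Hs = ({(v,x). v \<in> verts F \<and> x \<in> verts (Hs v)},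
     (\<lambda>(v,x) (w,y). (v = w \<and> v \<in> verts F \<and> adj (Hs v) x y) \<or>
        (adj F v w \<and> x \<in> verts (Hs v) \<and> y \<in> verts (Hs w))))"

text \<open>The graph H^U: two copies (tagged False / True) of the blow-up; for v in U, the edges
  inside both copies of part v are removed and replaced by a copy of (Hs v) x K_2 between them.\<close>
definition blowup_U :: "'v graph \<Rightarrow> ('v \<Rightarrow> 'a graph) \<Rightarrow> 'v set \<Rightarrow> (('v \<times> 'a) \<times> bool) graph" where
  "blowup_U F Hs U = (verts (blowup F Hs) \<times> UNIV,
     (\<lambda>((v,x),i) ((w,y),j).
        if v = w \<and> v \<in> U then v \<in> verts F \<and> adj (Hs v) x y \<and> i \<noteq> j
        else i = j \<and> adj (blowup F Hs) (v,x) (w,y)))"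

end

theory Submission
  imports Defs
begin

theorem lemma5p3:
  fixes F :: "'v graph" and \<H> :: "'a graph set" and Hs :: "'v \<Rightarrow> 'a graph"
  assumes "simple_graph F" and "bipartite F"
    and "\<H> \<noteq> {}" and "\<forall>G\<in>\<H>. simple_graph G"
    and "\<forall>v\<in>verts F. Hs v \<in> \<H>"
  shows "graph_iso (tensor_K2 (blowup F Hs)) (blowup_U F Hs (verts F))"
proof -
  obtain A where A: "\<forall>x y. adj F x y \<longrightarrow> (x \<in> A \<longleftrightarrow> y \<notin> A)"
    using assms(2) unfolding bipartite_def by blast
  have noloop: "\<And>v. \<not> adj F v v" using assms(1) unfolding simple_graph_def by blast
  define f :: "(('v \<times> 'a) \<times> bool) \<Rightarrow> (('v \<times> 'a) \<times> bool)"
    where "f = (\<lambda>((v,x),i). ((v,x), if v \<in> A then i else \<not> i))"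
  have ff: "\<And>p. f (f p) = p" unfolding f_def by (auto split: if_splits)
  have vs: "verts (tensor_K2 (blowup F Hs)) = verts (blowup_U F Hs (verts F))"
    unfolding tensor_K2_def blowup_U_def verts_def by simp
  have fin: "\<And>p. p \<in> verts (blowup_U F Hs (verts F)) \<Longrightarrow> f p \<in> verts (blowup_U F Hs (verts F))"
    unfolding f_def blowup_U_def verts_def by auto
  have bij: "bij_betw f (verts (tensor_K2 (blowup F Hs))) (verts (blowup_U F Hs (verts F)))"
    unfolding vs by (rule bij_betw_byWitness[where f'=f]) (auto simp: ff fin)
  show ?thesis
    unfolding graph_iso_def
  proof (intro exI conjI ballI)
    show "bij_betw f (verts (tensor_K2 (blowup F Hs))) (verts (blowup_U F Hs (verts F)))" by (rule bij)
  next
    fix p q assume p: "p \<in> verts (tensor_K2 (blowup F Hs))" and q: "q \<in> verts (tensor_K2 (blowup F Hs))"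
    obtain v x i where pe: "p = ((v,x),i)" by (metis prod.collapse)
    obtain w y j where qe: "q = ((w,y),j)" by (metis prod.collapse)
    have v: "v \<in> verts F" and w: "w \<in> verts F" using p q unfolding pe qe tensor_K2_def blowup_def verts_def by auto
    show "adj (tensor_K2 (blowup F Hs)) p q = adj (blowup_U F Hs (verts F)) (f p) (f q)"
    proof (cases "v = w")
      case True
      then show ?thesis using v noloop unfolding pe qe f_def tensor_K2_def blowup_U_def blowup_def adj_def verts_def
        by auto
    next
      case False
      have "adj F v w \<Longrightarrow> (v \<in> A \<longleftrightarrow> w \<notin> A)" using A by blast
      then show ?thesis using False v w unfolding pe qe f_def tensor_K2_def blowup_U_def blowup_def adj_def verts_def
        by auto
    qed
  qed
qed

end
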